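(* Let $n=2k$ with $k\ge1$, and let $$W(X_1,\dots,X_n)=\sum_{j=1}^nX_j+\sum_{j=1}^n\frac1{X_j}+\prod_{j=1}^nX_j+\prod_{j=1}^n\frac1{X_j}$$ on $(\mathbb{C}^* )^n$. Then every critical point of $W$ in $(\mathbb{C}^* )^n$ is non-degenerate, i.e. the Hessian matrix $(\partial^2W/\partial X_j\partial X_k)$ is invertible at every point where $\nabla W=0$.
   Context: $W$ is the superpotential $\sum_{v\in\mathrm{vert}(P)}x^v$ of the del Pezzo polytope $P^k_{dP}\subset\mathbb{R}^{2k}$. This polytope is the convex hull of $\pm e_1,\dots,\pm e_{2k}$ and $\pm(e_1+\dots+e_{2k})$, and it is the polytope associated with the del Pezzo toric variety $V_k$. *)

theory Defs
  imports "HOL-Analysis.Analysis"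
begin

definition partial_deriv :: "'n::finite \<Rightarrow> (complex^'n \<Rightarrow> complex) \<Rightarrow> complex^'n \<Rightarrow> complex" where
  "partial_deriv j f x = deriv (\<lambda>t. f (\<chi> i. if i = j then t else x $ i)) (x $ j)"

text \<open>The superpotential W of the del Pezzo polytope (vertices \<plusminus>e_j, \<plusminus>(e_1+...+e_n)).\<close>
definition dP_W :: "complex^'n::finite \<Rightarrow> complex" where
  "dP_W X = (\<Sum>j\<in>UNIV. X $ j) + (\<Sum>j\<in>UNIV. 1 / X $ j) + (\<Prod>j\<in>UNIV. X $ j) + (\<Prod>j\<in>UNIV. 1 / X $ j)"

definition hessian :: "(complex^'n::finite \<Rightarrow> complex) \<Rightarrow> complex^'n \<Rightarrow> complex^'n^'n" where
  "hessian f x = (\<chi> i j. partial_deriv i (partial_deriv j f) x)"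

end

theory Submission imports Defs begin

definition upd :: "complex^'n::finite \<Rightarrow> 'n \<Rightarrow> complex \<Rightarrow> complex^'n" where
  "upd X j t = (\<chi> i. if i = j then t else X $ i)"

lemma pd_upd: "partial_deriv j f X = deriv (\<lambda>t. f (upd X j t)) (X $ j)"
  by (simp add: partial_deriv_def upd_def)

lemma upd_same[simp]: "upd X j t $ j = t" and upd_other[simp]: "i \<noteq> j \<Longrightarrow> upd X j t $ i = X $ i"
  by (auto simp: upd_def)

lemma dPW_upd: "dP_W (upd X j t) = t + (\<Sum>l\<in>-{j}. X$l) + 1/t + (\<Sum>l\<in>-{j}. 1/X$l)
   + t * (\<Prod>l\<in>-{j}. X$l) + (1/t) * (\<Prod>l\<in>-{j}. 1/X$l)"
proof -
  have s: "\<And>g::complex\<Rightarrow>complex. (\<Sum>l\<in>UNIV. g (upd X j t $ l)) = g t + (\<Sum>l\<in>-{j}. g (X$l))"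
    by (subst sum.remove[of UNIV j]) (auto simp: Compl_eq_Diff_UNIV intro!: sum.cong)
  have p: "\<And>g::complex\<Rightarrow>complex. (\<Prod>l\<in>UNIV. g (upd X j t $ l)) = g t * (\<Prod>l\<in>-{j}. g (X$l))"
    by (subst prod.remove[of UNIV j]) (auto simp: Compl_eq_Diff_UNIV intro!: prod.cong)
  show ?thesis unfolding dP_W_def
    using s[of "\<lambda>x. x"] s[of "\<lambda>x. 1/x"] p[of "\<lambda>x. x"] p[of "\<lambda>x. 1/x"] by simp
qed

definition pW :: "'n::finite \<Rightarrow> complex^'n \<Rightarrow> complex" where
  "pW j X = 1 - 1/(X$j)^2 + (\<Prod>l\<in>-{j}. X$l) - (\<Prod>l\<in>-{j}. 1/X$l) / (X$j)^2"

lemma pd_dPW: assumes "X$j \<noteq> 0" shows "partial_deriv j dP_W X = pW j X"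
proof -
  let ?A = "(\<Sum>l\<in>-{j}. X$l)" let ?B = "(\<Sum>l\<in>-{j}. 1/X$l)"
  let ?Q = "(\<Prod>l\<in>-{j}. X$l)" let ?R = "(\<Prod>l\<in>-{j}. 1/X$l)"
  have "((\<lambda>t. t + ?A + 1/t + ?B + t * ?Q + (1/t) * ?R) has_field_derivative
      (1 - 1/(X$j)^2 + ?Q - ?R/(X$j)^2)) (at (X$j))"
    using assms
    by (auto intro!: derivative_eq_intros simp: field_simps power2_eq_square)
  then show ?thesis unfolding pd_upd dPW_upd pW_def by (rule DERIV_imp_deriv)
qed


lemma prod_split2: assumes "i \<noteq> j"
  shows "(\<Prod>l\<in>-{j}. (f::'n::finite\<Rightarrow>complex) l) = f i * (\<Prod>l\<in>-{j}-{i}. f l)"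
  using assms by (subst prod.remove[of "-{j}" i]) auto

lemma prod_split1: "(\<Prod>l\<in>UNIV. (f::'n::finite\<Rightarrow>complex) l) = f j * (\<Prod>l\<in>-{j}. f l)"
  by (subst prod.remove[of UNIV j]) (auto simp: Compl_eq_Diff_UNIV)

lemma prod_inv: "(\<Prod>l\<in>A. 1 / (f l::complex)) = 1 / (\<Prod>l\<in>A. f l)"
  by (simp add: prod_dividef)

lemma hess_off: assumes "i \<noteq> j" "\<forall>l. X $ l \<noteq> 0"
  shows "hessian dP_W X $ i $ j = ((\<Prod>l\<in>UNIV. X$l) + 1/(\<Prod>l\<in>UNIV. X$l)) / (X$i * X$j)"
proof -
  let ?Q = "(\<Prod>l\<in>-{j}-{i}. X$l)"
  have Q0: "?Q \<noteq> 0" using assms by auto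
  have eq: "(\<lambda>t. partial_deriv j dP_W (upd X i t)) = (\<lambda>t. 1 - 1/(X$j)^2 + t * ?Q - (1/t) * (1/?Q) / (X$j)^2)"
  proof
    fix t
    have "partial_deriv j dP_W (upd X i t) = pW j (upd X i t)"
      using assms by (intro pd_dPW) simp
    also have "\<dots> = 1 - 1/(X$j)^2 + t * ?Q - (1/t) * (1/?Q) / (X$j)^2"
      unfolding pW_def using assms
      by (simp add: prod_split2[OF assms(1), of "\<lambda>l. upd X i t $ l"] prod_split2[OF assms(1), of "\<lambda>l. 1 / upd X i t $ l"] prod_inv)
    finally show "partial_deriv j dP_W (upd X i t) = 1 - 1/(X$j)^2 + t * ?Q - (1/t) * (1/?Q) / (X$j)^2" .
  qed
  have "((\<lambda>t. 1 - 1/(X$j)^2 + t * ?Q - (1/t) * (1/?Q) / (X$j)^2) has_field_derivative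
        (?Q + 1/?Q/((X$i)^2 * (X$j)^2))) (at (X$i))"
    using assms by (auto intro!: derivative_eq_intros simp: field_simps power2_eq_square)
  then have "hessian dP_W X $ i $ j = ?Q + 1/?Q/((X$i)^2 * (X$j)^2)"
    unfolding hessian_def by (simp add: pd_upd[of i] eq DERIV_imp_deriv)
  also have "\<dots> = ((\<Prod>l\<in>UNIV. X$l) + 1/(\<Prod>l\<in>UNIV. X$l)) / (X$i * X$j)"
    using assms Q0
    by (simp add: prod_split1[of _ j] prod_split2[OF assms(1)] field_simps power2_eq_square)
  finally show ?thesis .
qed

lemma hess_diag: assumes "\<forall>l. X $ l \<noteq> 0"
  shows "hessian dP_W X $ j $ j = 2/(X$j)^3 + 2/((\<Prod>l\<in>UNIV. X$l) * (X$j)^2)"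
proof -
  let ?Q = "(\<Prod>l\<in>-{j}. X$l)"
  have Q0: "?Q \<noteq> 0" using assms by auto
  have ev: "\<forall>\<^sub>F t in nhds (X$j). partial_deriv j dP_W (upd X j t) = 1 - 1/t^2 + ?Q - (1/?Q) / t^2"
  proof -
    have "\<forall>\<^sub>F t in nhds (X$j). t \<noteq> 0" using assms by (intro t1_space_nhds) auto
    then show ?thesis
  proof (rule eventually_mono)
    fix t :: complex assume "t \<noteq> 0"
    then have "partial_deriv j dP_W (upd X j t) = pW j (upd X j t)"
      by (intro pd_dPW) simp
    also have "\<dots> = 1 - 1/t^2 + ?Q - (1/?Q) / t^2"
      unfolding pW_def by (simp add: prod_inv)
    finally show "partial_deriv j dP_W (upd X j t) = 1 - 1/t^2 + ?Q - (1/?Q) / t^2" .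
  qed
  qed
  have "((\<lambda>t. 1 - 1/t^2 + ?Q - (1/?Q) / t^2) has_field_derivative
        (2/(X$j)^3 + 2/?Q/(X$j)^3)) (at (X$j))"
    using assms by (auto intro!: derivative_eq_intros simp: field_simps power2_eq_square power3_eq_cube)
  then have "hessian dP_W X $ j $ j = 2/(X$j)^3 + 2/?Q/(X$j)^3" (is "_ = ?D")
  proof -
    assume D: "((\<lambda>t. 1 - 1/t^2 + ?Q - (1/?Q) / t^2) has_field_derivative ?D) (at (X$j))"
    have "hessian dP_W X $ j $ j = deriv (\<lambda>t. partial_deriv j dP_W (upd X j t)) (X$j)"
      unfolding hessian_def by (simp only: pd_upd[of j "partial_deriv j dP_W"] vec_lambda_beta)
    also have "\<dots> = deriv (\<lambda>t. 1 - 1/t^2 + ?Q - (1/?Q) / t^2) (X$j)"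
      by (rule deriv_cong_ev[OF ev refl])
    finally show ?thesis using DERIV_imp_deriv[OF D] by simp
  qed
  also have "\<dots> = 2/(X$j)^3 + 2/((\<Prod>l\<in>UNIV. X$l) * (X$j)^2)"
    using assms Q0
    by (simp add: prod_split1[of _ j] field_simps power2_eq_square power3_eq_cube)
  finally show ?thesis .
qed

lemma crit: assumes "\<forall>l. X $ l \<noteq> 0" "partial_deriv j dP_W X = 0"
  shows "X$j - 1/X$j + (\<Prod>l\<in>UNIV. X$l) - 1/(\<Prod>l\<in>UNIV. X$l) = 0"
proof -
  have Q0: "(\<Prod>l\<in>-{j}. X$l) \<noteq> 0" using assms by auto
  have "pW j X = 0" using assms pd_dPW by metis
  then have "1 - 1/(X$j)^2 + (\<Prod>l\<in>-{j}. X$l) - 1/(\<Prod>l\<in>-{j}. X$l) / (X$j)^2 = 0"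
    unfolding pW_def by (simp add: prod_inv)
  moreover have "X$j - 1/X$j + (\<Prod>l\<in>UNIV. X$l) - 1/(\<Prod>l\<in>UNIV. X$l) =
     X$j * (1 - 1/(X$j)^2 + (\<Prod>l\<in>-{j}. X$l) - 1/(\<Prod>l\<in>-{j}. X$l) / (X$j)^2)"
    using assms Q0 by (simp add: prod_split1[of _ j] field_simps power2_eq_square)
  ultimately show ?thesis by simp
qed


theorem mainTheorem6:
  fixes X :: "complex ^ 'n::finite"
  assumes "even CARD('n)"
    and "\<forall>j. X $ j \<noteq> 0"
    and "\<forall>j. partial_deriv j dP_W X = 0"
  shows "invertible (hessian dP_W X)"
proof -
  define x where "x = (\<lambda>i. X $ i)"
  define P where "P = (\<Prod>l\<in>UNIV. X$l)"
  define s where "s = P + 1/P"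
  define c where "c = P - 1/P"
  define d where "d = (\<lambda>i. x i + 1 / x i)"
  have x0: "\<And>i. x i \<noteq> 0" using assms(2) by (simp add: x_def)
  have P0: "P \<noteq> 0" using assms(2) by (simp add: P_def)
  have cr: "\<And>i. x i - 1/x i = - c"
  proof -
    fix i show "x i - 1/x i = - c" using crit[OF assms(2) assms(3)[rule_format, of i]]
      by (simp add: x_def P_def c_def algebra_simps)
  qed
  have Hoff: "\<And>i j. i \<noteq> j \<Longrightarrow> hessian dP_W X $ i $ j = s / (x i * x j)"
    using hess_off assms(2) by (simp add: s_def P_def x_def)
  have Hdiag: "\<And>i. hessian dP_W X $ i $ i = s / (x i * x i) + d i / (x i * x i)"
  proof -
    fix i
    have "hessian dP_W X $ i $ i = 2/(x i)^3 + 2/(P * (x i)^2)"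
      using hess_diag assms(2) by (simp add: P_def x_def)
    also have "\<dots> = s / (x i * x i) + d i / (x i * x i)"
    proof -
      have h: "P^2 * x i + P * (x i)^2 = P + x i"
        using cr[of i] x0[of i] P0 unfolding c_def by (simp add: field_simps power2_eq_square)
      have "2/(x i)^3 + 2/(P * (x i)^2) - (s / (x i * x i) + d i / (x i * x i))
          = ((P + x i) - (P^2 * x i + P * (x i)^2)) / (P * x i ^ 3)"
        using x0[of i] P0 unfolding s_def d_def by (simp add: field_simps power2_eq_square power3_eq_cube)
      then show ?thesis using h by simp
    qed
    finally show "hessian dP_W X $ i $ i = s / (x i * x i) + d i / (x i * x i)" .
  qed
  have d0: "\<And>i. d i \<noteq> 0"
  proof
    fix i assume di: "d i = 0"
    define y where "y = x i"
    have y0: "y \<noteq> 0" using x0 by (simp add: y_def)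
    have yy: "y^2 = -1" using di y0 unfolding d_def y_def[symmetric]
      by (simp add: field_simps power2_eq_square) (metis add_eq_0_iff)
    have iy: "1/y = -y" using yy y0 by (simp add: field_simps power2_eq_square)
    have all: "\<And>l. x l = y"
    proof -
      fix l
      have "x l - 1/x l = y - 1/y" using cr[of l] cr[of i] by (simp add: y_def)
      then have "x l - 1/x l = 2*y" using iy by simp
      then have "(x l)^2 - 2*y*x l - 1 = 0" using x0[of l] by (simp add: field_simps power2_eq_square)
      then have "(x l - y)^2 = 0" using yy by (simp add: power2_eq_square algebra_simps)
      then show "x l = y" by simp
    qed
    have "P = y ^ CARD('n)" unfolding P_def using all by (simp add: x_def)
    then have "P^2 = (y^2)^CARD('n)" by (simp add: power_mult[symmetric] mult.commute)
    then have "P^2 = 1" using yy assms(1) by simp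
    then have "c = 0" unfolding c_def using P0 by (simp add: field_simps power2_eq_square)
    then have "y - 1/y = 0" using cr[of i] by (simp add: y_def)
    then show False using iy y0 by simp
  qed
  have "\<forall>v. hessian dP_W X *v v = 0 \<longrightarrow> v = 0"
  proof (intro allI impI)
    fix v :: "complex^'n" assume Hv: "hessian dP_W X *v v = 0"
    define w where "w = (\<lambda>j. v $ j / x j)"
    define W where "W = (\<Sum>j\<in>UNIV. w j)"
    have eqs: "\<And>i. s * W + d i * w i = 0"
    proof -
      fix i
      have "(hessian dP_W X *v v) $ i = (\<Sum>j\<in>UNIV. hessian dP_W X $ i $ j * v $ j)"
        by (simp add: matrix_vector_mult_def)
      also have "\<dots> = (\<Sum>j\<in>UNIV. s / x i * w j + (if j = i then d i / x i * w i else 0))"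
        using x0 by (intro sum.cong refl) (auto simp: Hoff Hdiag w_def field_simps)
      also have "\<dots> = (s * W + d i * w i) / x i"
        by (simp add: sum.distrib sum_distrib_left[symmetric] sum_divide_distrib[symmetric] W_def add_divide_distrib)
      finally show "s * W + d i * w i = 0" using Hv x0[of i] by simp
    qed
    have "W = 0"
    proof (rule ccontr)
      assume W0: "W \<noteq> 0"
      have wi: "\<And>i. w i = - s * W / d i" using eqs d0 by (simp add: field_simps) (metis add_eq_0_iff mult.commute)
      have "W = (\<Sum>i\<in>UNIV. w i)" by (simp add: W_def)
      also have "\<dots> = (\<Sum>i\<in>UNIV. - s * W * (1 / d i))" by (simp add: wi)
      also have "\<dots> = - s * W * (\<Sum>i\<in>UNIV. 1 / d i)" by (simp add: sum_distrib_left)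
      finally have "W = - s * W * (\<Sum>i\<in>UNIV. 1 / d i)" .
      then have "W * (1 + s * (\<Sum>i\<in>UNIV. 1 / d i)) = 0"
      proof -
        assume h: "W = - s * W * (\<Sum>i\<in>UNIV. 1 / d i)"
        have "W * (1 + s * (\<Sum>i\<in>UNIV. 1 / d i)) = W - (- s * W * (\<Sum>i\<in>UNIV. 1 / d i))"
          by (simp add: algebra_simps)
        also have "\<dots> = W - W" by (simp only: h[symmetric])
        finally show ?thesis by simp
      qed
      then have key: "1 + s * (\<Sum>i\<in>UNIV. 1 / d i) = 0" using W0 by simp
      obtain i0 :: 'n where True by simp
      define D where "D = d i0"
      have sq: "\<And>i. (d i)^2 = c^2 + 4"
      proof -
        fix i
        have "(d i)^2 = (x i - 1/x i)^2 + 4" unfolding d_def using x0[of i]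
          by (simp add: field_simps power2_eq_square)
        then show "(d i)^2 = c^2 + 4" using cr[of i] by simp
      qed
      have D0: "D \<noteq> 0" using d0 by (simp add: D_def)
      have pm: "\<And>i. d i = D \<or> d i = - D"
      proof -
        fix i
        have "(d i - D) * (d i + D) = 0" using sq[of i] sq[of i0]
          by (simp add: D_def algebra_simps power2_eq_square)
        then show "d i = D \<or> d i = - D" by (auto simp add: add_eq_0_iff)
      qed
      define r :: int where "r = (\<Sum>i\<in>UNIV. if d i = D then 1 else -1)"
      have "(\<Sum>i\<in>UNIV. 1 / d i) = (\<Sum>i\<in>UNIV. of_int (if d i = D then 1 else -1) / D)"
      proof (intro sum.cong refl)
        fix i
        show "1 / d i = of_int (if d i = D then 1 else -1) / D"
          using pm[of i] D0 by auto
      qed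
      also have "\<dots> = of_int r / D"
        by (simp only: sum_divide_distrib[symmetric] r_def of_int_sum)
      finally have sumd: "(\<Sum>i\<in>UNIV. 1 / d i) = of_int r / D" .
      have "r = (\<Sum>i\<in>UNIV. 1 - 2 * (if d i = D then 0 else 1))"
        unfolding r_def by (intro sum.cong refl) auto
      also have "\<dots> = int CARD('n) - 2 * (\<Sum>i\<in>UNIV. (if d i = D then 0 else 1))"
        by (simp add: sum_subtractf sum_distrib_left)
      finally have er: "even r" using assms(1) by simp
      have ss: "s^2 = D^2"
      proof -
        have "s^2 = c^2 + 4" unfolding s_def c_def using P0 by (simp add: field_simps power2_eq_square)
        then show ?thesis using sq[of i0] by (simp add: D_def)
      qed
      have "D + s * of_int r = 0" using key D0 unfolding sumd by (simp add: field_simps)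
      then have "D = - s * of_int r" by (simp add: add_eq_0_iff)
      then have "D^2 = s^2 * (of_int r)^2" by (simp add: power_mult_distrib)
      then have "D^2 * 1 = D^2 * (of_int r)^2" using ss by simp
      then have "(of_int r :: complex)^2 = 1" using D0 by (metis mult_left_cancel power_not_zero)
      then have "(of_int (r^2) :: complex) = of_int 1" by simp
      then have "r^2 = 1" by (simp only: of_int_eq_iff)
      moreover have "even (r^2)" using er by simp
      ultimately show False by simp
    qed
    show "v = 0"
    proof (rule vec_eq_iff[THEN iffD2], intro allI)
      fix i
      have "d i * w i = 0" using eqs[of i] \<open>W = 0\<close> by simp
      then have "w i = 0" using d0[of i] by simp
      then show "v $ i = 0 $ i" using x0[of i] by (simp add: w_def)
    qed
  qed
  then show ?thesis
    by (simp add: invertible_left_inverse matrix_left_invertible_ker)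
qed
end
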